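(* Let \(\mathcal{I}\) be an instance of 3-SAT and let \(G(\mathcal{I})\), \(T(\mathcal{I})\) be as constructed below. If \(\mathcal{I}\) has a satisfying assignment, then \(T(\mathcal{I})\) is the \(\mathcal{F}\)-tree of some MCS ordering of \(G(\mathcal{I})\), and therefore also the \(\mathcal{F}\)-tree of some MNS ordering of \(G(\mathcal{I})\).
   Context: Let \(\mathcal{I}\) have variables \(x_1,\dots,x_k\) and clauses \(C_1,\dots,C_l\), each a disjunction of three literals. \(G(\mathcal{I})\) has vertices: literal vertices \(X=\{x_1,\dots,x_k,\overline{x_1},\dots,\overline{x_k}\}\), clause vertices \(c_1,\dots,c_l\), and six vertices \(r,p,q,a,b,t\). Edges: any two vertices of \(X\) are adjacent except the pairs \(x_j\overline{x_j}\); the clause vertices are pairwise nonadjacent; \(c_i\) is adjacent to every vertex of \(X\) except the three literal vertices of the literals of \(C_i\); each of \(r,p,q,a\) is adjacent to all literal vertices and all clause vertices; \(b\) is adjacent to all literal vertices; additionally the edges \(ab,ap,aq,bq,br,bt,pr,qr,qt\); no other edges. \(T(\mathcal{I})\) is the spanning tree consisting of all edges of \(G(\mathcal{I})\) incident to \(r\) together with the edges \(pa\) and \(bt\). With \(n\) the number of vertices: an MCS ordering is produced by repeatedly choosing an unnumbered vertex with the largest number of numbered neighbors; an MNS ordering uses set labels (all \(\emptyset\), start vertex gets \(\{n+1\}\); repeatedly pick an unnumbered vertex with inclusion-maximal label as \(v_j\) and add \(j\) to the labels of its unnumbered neighbors); ties are arbitrary. The \(\mathcal{F}\)-tree of an ordering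 \((v_1,\dots,v_n)\) has, for each \(v\ne v_1\), an edge from \(v\) to its leftmost neighbor in the ordering. *)

theory Defs
  imports Main
begin

definition is_ordering :: "'a set \<Rightarrow> 'a list \<Rightarrow> bool" where
  "is_ordering V vs \<longleftrightarrow> distinct vs \<and> set vs = V"

text \<open>MCS: at step j (0-based), the numbered vertices are those in take j vs; the
  chosen vertex vs!j has a maximum number of numbered neighbours among the
  unnumbered vertices (set (drop j vs)).\<close>

definition mcs_ordering :: "'a set \<Rightarrow> ('a \<Rightarrow> 'a \<Rightarrow> bool) \<Rightarrow> 'a list \<Rightarrow> bool" where
  "mcs_ordering V E vs \<longleftrightarrow> is_ordering V vs \<and>
     (\<forall>j < length vs. \<forall>u \<in> set (drop j vs).
        card {w \<in> set (take j vs). E u w} \<le> card {w \<in> set (take j vs). E (vs ! j) w})"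

text \<open>MNS labels: vs!i is the vertex v_(i+1) receiving number i+1.  Before the
  choice of v_(j+1) (0-based step j) the label of v is {n+1} if v is the start
  vertex, together with the numbers of its already numbered neighbours.\<close>

definition mns_label :: "('a \<Rightarrow> 'a \<Rightarrow> bool) \<Rightarrow> 'a list \<Rightarrow> nat \<Rightarrow> 'a \<Rightarrow> nat set" where
  "mns_label E vs j v =
     (if v = hd vs then {length vs + 1} else {}) \<union> {Suc i | i. i < j \<and> E (vs ! i) v}"

definition mns_ordering :: "'a set \<Rightarrow> ('a \<Rightarrow> 'a \<Rightarrow> bool) \<Rightarrow> 'a list \<Rightarrow> bool" where
  "mns_ordering V E vs \<longleftrightarrow> is_ordering V vs \<and>
     (\<forall>j < length vs. \<forall>u \<in> set (drop j vs).
        \<not> (mns_label E vs j (vs ! j) \<subset> mns_label E vs j u))"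

text \<open>F-tree: for each v different from v_1 an edge from v to its leftmost
  neighbour in the ordering.  Edges are represented as doubleton sets.\<close>

definition F_tree :: "('a \<Rightarrow> 'a \<Rightarrow> bool) \<Rightarrow> 'a list \<Rightarrow> 'a set set" where
  "F_tree E vs = {{v, w} | v w. v \<in> set vs \<and> v \<noteq> hd vs \<and>
      (\<exists>i < length vs. vs ! i = w \<and> E v w \<and> (\<forall>i' < i. \<not> E v (vs ! i')))}"

text \<open>An instance: variables x_0..x_(k-1), clauses C_0..C_(l-1); clause i is the
  list cl i of its three literals; a literal (j, True) is x_j and (j, False)
  is the negation of x_j.\<close>

definition wf_instance :: "nat \<Rightarrow> nat \<Rightarrow> (nat \<Rightarrow> (nat \<times> bool) list) \<Rightarrow> bool" where
  "wf_instance k l cl \<longleftrightarrow> (\<forall>i < l. length (cl i) = 3 \<and> (\<forall>(j, s) \<in> set (cl i). j < k))"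

definition satisfiable :: "nat \<Rightarrow> nat \<Rightarrow> (nat \<Rightarrow> (nat \<times> bool) list) \<Rightarrow> bool" where
  "satisfiable k l cl \<longleftrightarrow> (\<exists>\<sigma> :: nat \<Rightarrow> bool. \<forall>i < l. \<exists>(j, s) \<in> set (cl i). \<sigma> j = s)"

datatype vert = Lit nat bool | Cl nat | R | P | Q | A | B | Tv

definition GV :: "nat \<Rightarrow> nat \<Rightarrow> vert set" where
  "GV k l = {Lit j s | j s. j < k} \<union> {Cl i | i. i < l} \<union> {R, P, Q, A, B, Tv}"

definition adj0 :: "(nat \<Rightarrow> (nat \<times> bool) list) \<Rightarrow> vert \<Rightarrow> vert \<Rightarrow> bool" where
  "adj0 cl u v \<longleftrightarrow>
     (\<exists>j s j' s'. u = Lit j s \<and> v = Lit j' s' \<and> j \<noteq> j')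
   \<or> (\<exists>i j s. u = Cl i \<and> v = Lit j s \<and> (j, s) \<notin> set (cl i))
   \<or> (u \<in> {R, P, Q, A} \<and> ((\<exists>j s. v = Lit j s) \<or> (\<exists>i. v = Cl i)))
   \<or> (u = B \<and> (\<exists>j s. v = Lit j s))
   \<or> (u, v) \<in> {(A, B), (A, P), (A, Q), (B, Q), (B, R), (B, Tv), (P, R), (Q, R), (Q, Tv)}"

definition GE :: "nat \<Rightarrow> nat \<Rightarrow> (nat \<Rightarrow> (nat \<times> bool) list) \<Rightarrow> vert \<Rightarrow> vert \<Rightarrow> bool" where
  "GE k l cl u v \<longleftrightarrow> u \<in> GV k l \<and> v \<in> GV k l \<and> (adj0 cl u v \<or> adj0 cl v u)"

definition TT :: "nat \<Rightarrow> nat \<Rightarrow> (nat \<Rightarrow> (nat \<times> bool) list) \<Rightarrow> vert set set" where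
  "TT k l cl = {{R, x} | x. GE k l cl R x} \<union> {{P, A}, {B, Tv}}"

end

theory Submission
  imports Defs
begin


inductive mp :: "'a set \<Rightarrow> ('a \<Rightarrow> 'a \<Rightarrow> bool) \<Rightarrow> 'a list \<Rightarrow> bool" for V E where
  mp_Nil: "mp V E []"
| mp_snoc: "mp V E ps \<Longrightarrow> c \<in> V \<Longrightarrow> c \<notin> set ps \<Longrightarrow>
    (\<forall>u\<in>V - set ps. card {w\<in>set ps. E u w} \<le> card {w\<in>set ps. E c w}) \<Longrightarrow> mp V E (ps @ [c])"

lemma mp_props: "mp V E vs \<Longrightarrow> distinct vs \<and> set vs \<subseteq> V \<and>
  (\<forall>j<length vs. \<forall>u\<in>V - set (take j vs).
     card {w\<in>set (take j vs). E u w} \<le> card {w\<in>set (take j vs). E (vs!j) w})"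
proof (induction rule: mp.induct)
  case mp_Nil thus ?case by simp
next
  case (mp_snoc ps c)
  show ?case
  proof (intro conjI allI impI ballI)
    show "distinct (ps@[c])" using mp_snoc by simp
    show "set (ps@[c]) \<subseteq> V" using mp_snoc by simp
    fix j u assume j: "j < length (ps@[c])" and u: "u \<in> V - set (take j (ps@[c]))"
    show "card {w\<in>set (take j (ps@[c])). E u w} \<le> card {w\<in>set (take j (ps@[c])). E ((ps@[c])!j) w}"
    proof (cases "j < length ps")
      case True
      then have "take j (ps@[c]) = take j ps" "(ps@[c])!j = ps!j" by (simp_all add: nth_append)
      thus ?thesis using mp_snoc.IH True u by auto
    next
      case False
      with j have "j = length ps" by simp
      then have "take j (ps@[c]) = ps" "(ps@[c])!j = c" by simp_all
      thus ?thesis using mp_snoc.hyps(4) u by auto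
    qed
  qed
qed

lemma set_drop_distinct: "distinct vs \<Longrightarrow> set (drop j vs) = set vs - set (take j vs)"
proof -
  assume d: "distinct vs"
  have "set vs = set (take j vs) \<union> set (drop j vs)" by (metis append_take_drop_id set_append)
  moreover have "set (take j vs) \<inter> set (drop j vs) = {}" using d
    by (metis append_take_drop_id distinct_append)
  ultimately show ?thesis by blast
qed

lemma mp_mcs: "mp V E vs \<Longrightarrow> set vs = V \<Longrightarrow> mcs_ordering V E vs"
  using mp_props[of V E vs] set_drop_distinct[of vs]
  unfolding mcs_ordering_def is_ordering_def by auto

lemma mp_extend: "finite V \<Longrightarrow> mp V E ps \<Longrightarrow> \<exists>rest. mp V E (ps@rest) \<and> set (ps@rest) = V"
proof (induction "card (V - set ps)" arbitrary: ps rule: less_induct)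
  case less
  show ?case
  proof (cases "V - set ps = {}")
    case True
    have "set ps \<subseteq> V" using mp_props[OF less.prems(2)] by blast
    then show ?thesis using True less.prems by (intro exI[of _ "[]"]) auto
  next
    case False
    let ?f = "\<lambda>u. card {w\<in>set ps. E u w}"
    have fin: "finite (?f ` (V - set ps))" using less.prems by simp
    have "Max (?f ` (V - set ps)) \<in> ?f ` (V - set ps)" using fin False by (intro Max_in) auto
    then obtain c where c1: "c \<in> V - set ps" and c2: "?f c = Max (?f ` (V - set ps))" by auto
    have c3: "\<forall>u\<in>V - set ps. ?f u \<le> ?f c" using c2 fin by auto
    have mp2: "mp V E (ps@[c])" using less.prems c1 c3 by (intro mp_snoc) auto
    have "V - set (ps@[c]) = (V - set ps) - {c}" by auto
    then have "card (V - set (ps@[c])) < card (V - set ps)" using c1 less.prems(1)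
      card_Diff1_less[of "V - set ps" c] by simp
    from less.hyps[OF this less.prems(1) mp2] obtain rest where
      "mp V E ((ps @ [c]) @ rest)" "set ((ps @ [c]) @ rest) = V" by blast
    then show ?thesis by (intro exI[of _ "c # rest"]) simp
  qed
qed

lemma lab_card:
  assumes "distinct vs" "j \<le> length vs" "\<And>u v. E u v = E v u"
  shows "card {Suc i | i. i<j \<and> E (vs!i) v} = card {w\<in>set (take j vs). E v w}"
proof -
  have "{Suc i | i. i<j \<and> E (vs!i) v} = Suc ` {i. i<j \<and> E (vs!i) v}" by auto
  then have 1: "card {Suc i | i. i<j \<and> E (vs!i) v} = card {i. i<j \<and> E (vs!i) v}"
    by (simp add: card_image)
  have "{w\<in>set (take j vs). E v w} = (\<lambda>i. vs!i) ` {i. i<j \<and> E (vs!i) v}"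
    using assms by (auto simp: in_set_conv_nth nth_take min_def)
  moreover have "inj_on (\<lambda>i. vs!i) {i. i<j \<and> E (vs!i) v}"
    using assms inj_on_nth[of vs] by (smt (verit) inj_on_def mem_Collect_eq nth_eq_iff_index_eq order_less_le_trans)
  ultimately show ?thesis using 1 by (simp add: card_image)
qed

lemma mcs_mns:
  assumes sym: "\<And>u v. E u v = E v u" and m: "mcs_ordering V E vs"
  shows "mns_ordering V E vs"
  unfolding mns_ordering_def
proof (intro conjI allI impI ballI)
  show "is_ordering V vs" using m by (simp add: mcs_ordering_def)
  then have d: "distinct vs" by (simp add: is_ordering_def)
  fix j u assume j: "j < length vs" and u: "u \<in> set (drop j vs)"
  show "\<not> mns_label E vs j (vs ! j) \<subset> mns_label E vs j u"
  proof (cases "j = 0")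
    case True
    then have "vs ! j = hd vs" using j by (simp add: hd_conv_nth)
    then show ?thesis using True by (auto simp: mns_label_def)
  next
    case False
    have hdv: "hd vs = vs ! 0" using j by (cases vs) auto
    have "vs ! 0 \<in> set (take j vs)" using False j by (simp add: in_set_conv_nth) (metis False neq0_conv nth_take)
    then have "u \<noteq> hd vs" using u d hdv set_drop_distinct[OF d, of j] by auto
    moreover have "vs ! j \<noteq> hd vs" using hdv d j False nth_eq_iff_index_eq[OF d, of j 0] by fastforce
    ultimately have L: "mns_label E vs j u = {Suc i | i. i<j \<and> E (vs!i) u}"
      "mns_label E vs j (vs!j) = {Suc i | i. i<j \<and> E (vs!i) (vs!j)}"
      by (auto simp: mns_label_def)
    have mc: "card {w\<in>set (take j vs). E u w} \<le> card {w\<in>set (take j vs). E (vs!j) w}"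
      using m j u unfolding mcs_ordering_def by blast
    show ?thesis
    proof
      assume "mns_label E vs j (vs ! j) \<subset> mns_label E vs j u"
      then have "card (mns_label E vs j (vs ! j)) < card (mns_label E vs j u)"
        by (rule psubset_card_mono[rotated]) (simp add: L)
      then show False using mc L lab_card[of vs j E u] lab_card[of vs j E "vs!j"] d sym j by simp
    qed
  qed
qed

lemma F_tree_char:
  assumes "\<And>v. v \<in> set vs \<Longrightarrow> v \<noteq> hd vs \<Longrightarrow>
     \<exists>i<length vs. vs!i = f v \<and> E v (f v) \<and> (\<forall>i'<i. \<not> E v (vs!i'))"
  shows "F_tree E vs = {{v, f v} | v. v \<in> set vs \<and> v \<noteq> hd vs}"
  unfolding F_tree_def
proof (intro set_eqI iffI)
  fix e assume "e \<in> {{v, w} |v w. v \<in> set vs \<and> v \<noteq> hd vs \<and>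
      (\<exists>i<length vs. vs ! i = w \<and> E v w \<and> (\<forall>i'<i. \<not> E v (vs ! i')))}"
  then obtain v w i where e: "e = {v,w}" "v \<in> set vs" "v \<noteq> hd vs" "i < length vs" "vs!i = w"
    "E v w" "\<forall>i'<i. \<not> E v (vs ! i')" by blast
  from assms[OF e(2,3)] obtain i0 where i0: "i0 < length vs" "vs!i0 = f v" "E v (f v)"
    "\<forall>i'<i0. \<not> E v (vs!i')" by blast
  have "i = i0"
  proof (rule ccontr)
    assume "i \<noteq> i0"
    then have "i < i0 \<or> i0 < i" by arith
    then show False using e i0 by auto
  qed
  then show "e \<in> {{v, f v} | v. v \<in> set vs \<and> v \<noteq> hd vs}" using e i0 by auto
next
  fix e assume "e \<in> {{v, f v} | v. v \<in> set vs \<and> v \<noteq> hd vs}"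
  then obtain v where e: "e = {v, f v}" "v \<in> set vs" "v \<noteq> hd vs" by blast
  from assms[OF e(2,3)] show "e \<in> {{v, w} |v w. v \<in> set vs \<and> v \<noteq> hd vs \<and>
      (\<exists>i<length vs. vs ! i = w \<and> E v w \<and> (\<forall>i'<i. \<not> E v (vs ! i')))}" using e by blast
qed



lemma GV_simps[simp]: "Lit j s \<in> GV k l \<longleftrightarrow> j < k" "Cl i \<in> GV k l \<longleftrightarrow> i < l"
  "R \<in> GV k l" "P \<in> GV k l" "Q \<in> GV k l" "A \<in> GV k l" "B \<in> GV k l" "Tv \<in> GV k l"
  by (auto simp: GV_def)

lemma GV_finite: "finite (GV k l)"
proof -
  have "GV k l \<subseteq> (\<lambda>(j,s). Lit j s) ` ({..<k} \<times> UNIV) \<union> Cl ` {..<l} \<union> {R,P,Q,A,B,Tv}"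
    by (auto simp: GV_def)
  moreover have "finite ((\<lambda>(j,s). Lit j s) ` ({..<k} \<times> (UNIV::bool set)) \<union> Cl ` {..<l} \<union> {R,P,Q,A,B,Tv})"
    by simp
  ultimately show ?thesis by (rule finite_subset)
qed

lemma GE_simps[simp]:
  "GE k l cl (Lit j s) (Lit j2 s2) \<longleftrightarrow> j < k \<and> j2 < k \<and> j \<noteq> j2"
  "GE k l cl (Cl i) (Lit j s) \<longleftrightarrow> i < l \<and> j < k \<and> (j, s) \<notin> set (cl i)"
  "GE k l cl (Lit j s) (Cl i) \<longleftrightarrow> i < l \<and> j < k \<and> (j, s) \<notin> set (cl i)"
  "\<not> GE k l cl (Cl i) (Cl i2)"
  "GE k l cl R (Lit j s) \<longleftrightarrow> j < k"
  "GE k l cl (Lit j s) R \<longleftrightarrow> j < k"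
  "GE k l cl R (Cl i) \<longleftrightarrow> i < l"
  "GE k l cl (Cl i) R \<longleftrightarrow> i < l"
  "\<not> GE k l cl R R"
  "GE k l cl R P"
  "GE k l cl R Q"
  "\<not> GE k l cl R A"
  "GE k l cl R B"
  "\<not> GE k l cl R Tv"
  "GE k l cl P (Lit j s) \<longleftrightarrow> j < k"
  "GE k l cl (Lit j s) P \<longleftrightarrow> j < k"
  "GE k l cl P (Cl i) \<longleftrightarrow> i < l"
  "GE k l cl (Cl i) P \<longleftrightarrow> i < l"
  "GE k l cl P R"
  "\<not> GE k l cl P P"
  "\<not> GE k l cl P Q"
  "GE k l cl P A"
  "\<not> GE k l cl P B"
  "\<not> GE k l cl P Tv"
  "GE k l cl Q (Lit j s) \<longleftrightarrow> j < k"
  "GE k l cl (Lit j s) Q \<longleftrightarrow> j < k"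
  "GE k l cl Q (Cl i) \<longleftrightarrow> i < l"
  "GE k l cl (Cl i) Q \<longleftrightarrow> i < l"
  "GE k l cl Q R"
  "\<not> GE k l cl Q P"
  "\<not> GE k l cl Q Q"
  "GE k l cl Q A"
  "GE k l cl Q B"
  "GE k l cl Q Tv"
  "GE k l cl A (Lit j s) \<longleftrightarrow> j < k"
  "GE k l cl (Lit j s) A \<longleftrightarrow> j < k"
  "GE k l cl A (Cl i) \<longleftrightarrow> i < l"
  "GE k l cl (Cl i) A \<longleftrightarrow> i < l"
  "\<not> GE k l cl A R"
  "GE k l cl A P"
  "GE k l cl A Q"
  "\<not> GE k l cl A A"
  "GE k l cl A B"
  "\<not> GE k l cl A Tv"
  "GE k l cl B (Lit j s) \<longleftrightarrow> j < k"
  "GE k l cl (Lit j s) B \<longleftrightarrow> j < k"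
  "GE k l cl B (Cl i) \<longleftrightarrow> False"
  "GE k l cl (Cl i) B \<longleftrightarrow> False"
  "GE k l cl B R"
  "\<not> GE k l cl B P"
  "GE k l cl B Q"
  "GE k l cl B A"
  "\<not> GE k l cl B B"
  "GE k l cl B Tv"
  "GE k l cl Tv (Lit j s) \<longleftrightarrow> False"
  "GE k l cl (Lit j s) Tv \<longleftrightarrow> False"
  "GE k l cl Tv (Cl i) \<longleftrightarrow> False"
  "GE k l cl (Cl i) Tv \<longleftrightarrow> False"
  "\<not> GE k l cl Tv R"
  "\<not> GE k l cl Tv P"
  "GE k l cl Tv Q"
  "\<not> GE k l cl Tv A"
  "GE k l cl Tv B"
  "\<not> GE k l cl Tv Tv"
  by (simp_all add: GE_def adj0_def) blast+

lemma GE_sym: "GE k l cl u v = GE k l cl v u" unfolding GE_def by blast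

lemma step_gen:
  assumes "finite N" "zz \<in> N" "{w\<in>N. E c w} = N - {zz}" "u \<in> U" "\<forall>u\<in>U. \<exists>z\<in>N. \<not> E u z"
  shows "card {w\<in>N. E u w} \<le> card {w\<in>N. E c w}"
proof -
  obtain z where z: "z \<in> N" "\<not> E u z" using assms by blast
  have "card {w\<in>N. E u w} \<le> card (N - {z})" using z assms(1) by (intro card_mono) auto
  also have "\<dots> = card (N - {zz})" using z assms by simp
  finally show ?thesis using assms(3) by simp
qed

lemma mp_step:
  assumes "mp V E ps" "c \<in> V" "c \<notin> set ps" "zz \<in> set ps" "{w\<in>set ps. E c w} = set ps - {zz}"
    "\<forall>u\<in>V - set ps. \<exists>z\<in>set ps. \<not> E u z"
  shows "mp V E (ps @ [c])"
  using assms by (intro mp_snoc ballI step_gen[where zz=zz and U="V - set ps"]) auto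

lemma step_full:
  assumes "finite N" "\<forall>w\<in>N. E c w"
  shows "card {w\<in>N. E u w} \<le> card {w\<in>N. E c w}"
proof -
  have "{w\<in>N. E c w} = N" using assms by auto
  then show ?thesis using assms by (simp add: card_mono)
qed

theorem lemma11:
  fixes k l :: nat and cl :: "nat \<Rightarrow> (nat \<times> bool) list"
  assumes "wf_instance k l cl"
    and "satisfiable k l cl"
  shows "(\<exists>vs. mcs_ordering (GV k l) (GE k l cl) vs \<and> F_tree (GE k l cl) vs = TT k l cl)
       \<and> (\<exists>vs. mns_ordering (GV k l) (GE k l cl) vs \<and> F_tree (GE k l cl) vs = TT k l cl)"
proof -
  obtain \<sigma> where \<sigma>: "\<forall>i<l. \<exists>(j,s)\<in>set (cl i). \<sigma> j = s"
    using assms(2) unfolding satisfiable_def by blast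
  have wf: "\<And>i j s. i < l \<Longrightarrow> (j,s) \<in> set (cl i) \<Longrightarrow> j < k"
    using assms(1) unfolding wf_instance_def by blast
  define V where "V = GV k l"
  define E where "E = GE k l cl"
  define L where "L m = map (\<lambda>i. Lit i (\<sigma> i)) [0..<m]" for m
  have setL: "set (L m) = {Lit i (\<sigma> i) | i. i < m}" for m by (auto simp: L_def)
  have finV: "finite V" unfolding V_def by (rule GV_finite)
  have mpL: "m \<le> k \<Longrightarrow> mp V E ([R,P] @ L m)" for m
  proof (induction m)
    case 0
    have "mp V E []" by (rule mp_Nil)
    then have "mp V E ([] @ [R])" by (rule mp_snoc) (auto simp: V_def)
    then have "mp V E [R]" by simp
    then have "mp V E ([R] @ [P])"
      by (rule mp_snoc) (auto simp: V_def E_def intro!: card_mono)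
    then show ?case by (simp add: L_def)
  next
    case (Suc m)
    then have 1: "mp V E ([R,P] @ L m)" by simp
    have "mp V E (([R,P] @ L m) @ [Lit m (\<sigma> m)])"
    proof (rule mp_snoc[OF 1])
      show "Lit m (\<sigma> m) \<in> V" using Suc by (simp add: V_def)
      show "Lit m (\<sigma> m) \<notin> set ([R, P] @ L m)" by (auto simp: setL)
      show "\<forall>u\<in>V - set ([R, P] @ L m). card {w \<in> set ([R, P] @ L m). E u w}
           \<le> card {w \<in> set ([R, P] @ L m). E (Lit m (\<sigma> m)) w}"
        using Suc by (intro ballI step_full) (auto simp: setL V_def E_def)
    qed
    then show ?case by (simp add: L_def)
  qed
  have key: "\<exists>z\<in>set ([R,P] @ L k). \<not> E u z" if u: "u \<in> V - set ([R,P] @ L k)" for u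
  proof (cases u)
    case (Lit j s)
    then have "j < k" "s \<noteq> \<sigma> j" using u by (auto simp: V_def setL)
    then show ?thesis using Lit by (intro bexI[of _ "Lit j (\<sigma> j)"]) (auto simp: setL E_def)
  next
    case (Cl i)
    then have i: "i < l" using u by (auto simp: V_def)
    then obtain j s where js: "(j,s) \<in> set (cl i)" "\<sigma> j = s" using \<sigma> by blast
    then have "j < k" using wf i by blast
    then show ?thesis using Cl js by (intro bexI[of _ "Lit j (\<sigma> j)"]) (auto simp: setL E_def)
  next
    case A then show ?thesis by (intro bexI[of _ R]) (auto simp: E_def)
  qed (use u in \<open>auto simp: E_def\<close>)
  define ps where "ps = [R,P] @ L k @ [A,B,Q]"
  have mps: "mp V E ps"
  proof -
    have "mp V E (([R,P] @ L k) @ [A])"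
      by (rule mp_step[where zz=R, OF mpL[OF order_refl]])
        (use key in \<open>auto simp: setL E_def V_def\<close>)
    then have "mp V E (([R,P] @ L k @ [A]) @ [B])"
    proof (intro mp_step[where zz=P]; (simp only: append_assoc append_Cons append_Nil)?)
      have "\<forall>u\<in>V - set ([R, P] @ L k @ [A]). \<exists>z\<in>set ([R, P] @ L k @ [A]). \<not> E u z"
        using key by fastforce
      then show "\<forall>u\<in>V - set (R # P # L k @ [A]). \<exists>z\<in>set (R # P # L k @ [A]). \<not> E u z" by simp
    qed (auto simp: setL E_def V_def)
    then have "mp V E (([R,P] @ L k @ [A, B]) @ [Q])"
    proof (intro mp_step[where zz=P]; (simp only: append_assoc append_Cons append_Nil)?)
      have "\<forall>u\<in>V - set ([R, P] @ L k @ [A, B]). \<exists>z\<in>set ([R, P] @ L k @ [A, B]). \<not> E u z"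
        using key by fastforce
      then show "\<forall>u\<in>V - set (R # P # L k @ [A, B]). \<exists>z\<in>set (R # P # L k @ [A, B]). \<not> E u z" by simp
    qed (auto simp: setL E_def V_def)
    then show ?thesis by (simp add: ps_def)
  qed
  obtain rest where r: "mp V E (ps @ rest)" "set (ps @ rest) = V"
    using mp_extend[OF finV mps] by blast
  define vs where "vs = ps @ rest"
  have mcs: "mcs_ordering V E vs" unfolding vs_def by (rule mp_mcs[OF r])
  have mns: "mns_ordering V E vs" by (rule mcs_mns[OF _ mcs]) (simp add: E_def GE_sym)
  define f where "f v = (if v = A then P else if v = Tv then B else R)" for v
  have hd: "hd vs = R" by (simp add: vs_def ps_def)
  have setvs: "set vs = V" using r vs_def by simp
  have lenL: "length (L k) = k" by (simp add: L_def)
  have vs_eq: "vs = ([R,P] @ L k @ [A]) @ (B # Q # rest)" by (simp add: vs_def ps_def)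
  have adjR: "E v R" if "v \<in> V" "v \<noteq> R" "v \<noteq> A" "v \<noteq> Tv" for v
    using that by (cases v) (auto simp: E_def V_def)
  have adjR2: "v \<in> V \<and> v \<noteq> R \<and> v \<noteq> A \<and> v \<noteq> Tv" if "E R v" for v
  proof -
    have "v \<in> V" using that by (simp add: E_def GE_def V_def)
    then show ?thesis using that by (cases v) (auto simp: E_def)
  qed
  have Ft: "F_tree E vs = {{v, f v} | v. v \<in> set vs \<and> v \<noteq> hd vs}"
  proof (rule F_tree_char)
    fix v assume v: "v \<in> set vs" "v \<noteq> hd vs"
    then have vV: "v \<in> V" "v \<noteq> R" using setvs hd by auto
    show "\<exists>i<length vs. vs!i = f v \<and> E v (f v) \<and> (\<forall>i'<i. \<not> E v (vs!i'))"
    proof (cases "v = A")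
      case True
      have "1 < length vs" by (simp add: vs_def ps_def)
      with True show ?thesis
        by (intro exI[of _ 1]) (auto simp: vs_def ps_def f_def E_def less_Suc_eq)
    next
      case nA: False
      show ?thesis
      proof (cases "v = Tv")
        case True
        have "vs ! i' \<in> set ([R,P] @ L k @ [A])" if "i' < k + 3" for i'
        proof -
          have lenX: "length ([R,P] @ L k @ [A]) = k+3" using lenL by simp
          have "vs ! i' = ([R,P] @ L k @ [A]) ! i'"
            by (simp only: vs_eq nth_append[of "[R,P] @ L k @ [A]"] lenX that if_True)
          moreover have "([R,P] @ L k @ [A]) ! i' \<in> set ([R,P] @ L k @ [A])"
            by (rule nth_mem) (use that lenX in simp)
          ultimately show ?thesis by simp
        qed
        moreover have "\<not> E Tv x" if "x \<in> set ([R,P] @ L k @ [A])" for x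
          using that by (auto simp: setL E_def)
        ultimately have 1: "\<forall>i'<k+3. \<not> E Tv (vs ! i')" by blast
        have 2: "vs ! (k+3) = B" unfolding vs_eq using lenL by (simp add: nth_append)
        have 3: "k + 3 < length vs" unfolding vs_eq using lenL by simp
        show ?thesis using 1 2 3 True by (intro exI[of _ "k+3"]) (auto simp: f_def E_def)
      next
        case False
        have "E v R" using adjR vV nA False by blast
        then show ?thesis using nA False by (intro exI[of _ 0]) (auto simp: vs_def ps_def f_def)
      qed
    qed
  qed
  have TTe: "{{v, f v} | v. v \<in> set vs \<and> v \<noteq> hd vs} = TT k l cl"
  proof (intro set_eqI iffI)
    fix e assume "e \<in> {{v, f v} | v. v \<in> set vs \<and> v \<noteq> hd vs}"
    then obtain v where v: "v \<in> V" "v \<noteq> R" "e = {v, f v}" using setvs hd by auto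
    show "e \<in> TT k l cl"
    proof (cases "v = A \<or> v = Tv")
      case True then show ?thesis using v by (auto simp: TT_def f_def)
    next
      case False
      then have "E v R" using adjR v by blast
      then have "GE k l cl R v" by (simp add: E_def GE_sym)
      then show ?thesis using v False unfolding TT_def f_def by (auto simp: insert_commute)
    qed
  next
    fix e assume "e \<in> TT k l cl"
    then consider x where "e = {R, x}" "E R x" | "e = {P, A}" | "e = {B, Tv}"
      unfolding TT_def E_def by blast
    then show "e \<in> {{v, f v} | v. v \<in> set vs \<and> v \<noteq> hd vs}"
    proof cases
      case (1 x)
      then have "x \<in> V \<and> x \<noteq> R \<and> x \<noteq> A \<and> x \<noteq> Tv" using adjR2 by blast
      then show ?thesis using 1 setvs hd unfolding f_def
        by (intro CollectI exI[of _ x]) (auto simp: insert_commute)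
    next
      case 2
      then show ?thesis using setvs hd unfolding f_def
        by (intro CollectI exI[of _ A]) (auto simp: insert_commute V_def)
    next
      case 3
      then show ?thesis using setvs hd unfolding f_def
        by (intro CollectI exI[of _ Tv]) (auto simp: insert_commute V_def)
    qed
  qed
  have "F_tree E vs = TT k l cl" using Ft TTe by simp
  then show ?thesis using mcs mns unfolding V_def E_def by blast
qed

end
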